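(* Let $\lambda>0$, $x>0$, and let $X^*$ and $H$ be as in the context. Then 1. $\displaystyle\lim_{\varepsilon\to1}\mathbb{E}\big[e^{-xX^*}H(x,\varepsilon X^* )\big]=\frac{e^{-2\lambda}}{1-e^{-\lambda}}\exp[\lambda e^{-x}-x]\left\{\exp[\lambda e^{-x}]\,Q_1\!\left(\sqrt{2\lambda e^{-x}},\sqrt{2\lambda e^{-x}}\right)-1\right\}$; 2. $\displaystyle\lim_{\varepsilon\to\infty}\mathbb{E}\big[e^{-xX^*}H(x,\varepsilon X^* )\big]=\frac{e^{-2\lambda}}{1-e^{-\lambda}}\exp[\lambda e^{-x}-x]\left\{\exp[\lambda e^{-x}]-1\right\}$.
   Context: $X^*$ is a random variable with $\mathbb{P}(X^*=k)=e^{-\lambda}\lambda^{k-1}/(k-1)!$, $k=1,2,\ldots$. For $x>0$ and real $s>0$, $H(x,s):=\frac{e^{-\lambda}}{1-e^{-\lambda}}\left\{\frac{\exp[\lambda e^{-x}]\,\Gamma(s,\lambda e^{-x})}{\Gamma(s)}-1\right\}$, with $\Gamma(s,y)=\int_y^\infty t^{s-1}e^{-t}dt$ the upper incomplete gamma function. $Q_\nu(a,b)=a^{1-\nu}\int_b^\infty t^\nu\exp[-(t^2+a^2)/2]\,I_{\nu-1}(at)\,dt$ is the generalized Marcum Q-function of order $\nu$, where $I_\nu$ is the modified Bessel function of the first kind of order $\nu$. *)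

theory Defs
  imports "HOL-Analysis.Analysis" "HOL-Probability.Probability"
begin

definition Xstar_pmf :: "real \<Rightarrow> nat pmf" where
  "Xstar_pmf lam = map_pmf Suc (poisson_pmf lam)"

definition upper_inc_Gamma :: "real \<Rightarrow> real \<Rightarrow> real" where
  "upper_inc_Gamma s y = integral {y..} (\<lambda>t. t powr (s - 1) * exp (- t))"

definition H_fun :: "real \<Rightarrow> real \<Rightarrow> real \<Rightarrow> real" where
  "H_fun lam x s = exp (- lam) / (1 - exp (- lam)) *
     (exp (lam * exp (- x)) * upper_inc_Gamma s (lam * exp (- x)) / Gamma s - 1)"

definition bessel_I :: "real \<Rightarrow> real \<Rightarrow> real" where
  "bessel_I nu z = (\<Sum>m. (z / 2) powr (2 * real m + nu) * rGamma (real m + nu + 1) / fact m)"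

definition marcum_Q :: "real \<Rightarrow> real \<Rightarrow> real \<Rightarrow> real" where
  "marcum_Q nu a b = a powr (1 - nu) *
     integral {b..} (\<lambda>t. t powr nu * exp (- (t\<^sup>2 + a\<^sup>2) / 2) * bessel_I (nu - 1) (a * t))"

end

theory Submission
  imports Defs
begin

lemma f_has_Gamma:
  assumes "s > (0::real)"
  shows "((\<lambda>t. t powr (s-1) * exp(-t)) has_integral Gamma s) {0..}"
  using Gamma_integral_real[OF assms] by (simp add: exp_minus divide_inverse)

lemma f_int_sub:
  assumes "s > (0::real)" "S \<in> sets lebesgue" "S \<subseteq> {0..}"
  shows "(\<lambda>t. t powr (s-1) * exp(-t)) integrable_on S"
proof -
  have "(\<lambda>t. t powr (s-1) * exp(-t)) absolutely_integrable_on {0..}"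
    using f_has_Gamma[OF assms(1)] by (intro nonnegative_absolutely_integrable_1) auto
  then have "(\<lambda>t. t powr (s-1) * exp(-t)) absolutely_integrable_on S"
    by (rule set_integrable_subset[OF _ assms(2) assms(3)])
  then show ?thesis using set_lebesgue_integral_eq_integral(1) by blast
qed

lemma upper_split:
  assumes "s > (0::real)" "y \<ge> 0"
  shows "Gamma s = integral {0..y} (\<lambda>t. t powr (s-1) * exp(-t)) + upper_inc_Gamma s y"
proof -
  have "{0..y} \<union> {y..} = {0..}" using assms by auto
  moreover have "integral ({0..y} \<union> {y..}) (\<lambda>t. t powr (s-1) * exp(-t)) =
     integral {0..y} (\<lambda>t. t powr (s-1) * exp(-t)) + integral {y..} (\<lambda>t. t powr (s-1) * exp(-t))"
    apply (rule integral_Un)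
    using assms by (auto intro!: f_int_sub negligible_subset[of "{y}"])
  ultimately show ?thesis using f_has_Gamma[OF assms(1)]
    by (simp add: upper_inc_Gamma_def integral_unique)
qed

lemma upper_bounds:
  assumes "s > (0::real)" "y \<ge> 0"
  shows "0 \<le> upper_inc_Gamma s y" "upper_inc_Gamma s y \<le> Gamma s"
proof -
  show "0 \<le> upper_inc_Gamma s y" unfolding upper_inc_Gamma_def
    using assms by (intro integral_nonneg f_int_sub) auto
  have "0 \<le> integral {0..y} (\<lambda>t. t powr (s-1) * exp(-t))"
    using assms by (intro integral_nonneg f_int_sub) auto
  then show "upper_inc_Gamma s y \<le> Gamma s" using upper_split[OF assms] by linarith
qed

lemma improper_FTC:
  fixes f F :: "real \<Rightarrow> real"
  assumes f_borel: "f \<in> borel_measurable borel"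
  assumes f: "\<And>x. a \<le> x \<Longrightarrow> DERIV F x :> f x"
  assumes nonneg: "\<And>x. a \<le> x \<Longrightarrow> 0 \<le> f x"
  assumes lim: "(F \<longlongrightarrow> T) at_top"
  shows "(f has_integral (T - F a)) {a..}"
proof -
  have F_mono: "a \<le> x \<Longrightarrow> x \<le> y \<Longrightarrow> F x \<le> F y" for x y
    using f nonneg by (intro DERIV_nonneg_imp_nondecreasing[of x y F]) (auto intro: order_trans)
  then have F_le_T: "F a \<le> T"
    by (intro tendsto_lowerbound[OF lim]) (auto simp: eventually_at_top_linorder)
  have "(\<integral>\<^sup>+x. ennreal (f x) * indicator {a ..} x \<partial>lborel) = T - F a"
    by (rule nn_integral_FTC_atLeast[OF f_borel f nonneg lim])
  moreover have "(\<integral>\<^sup>+x. ennreal (f x) * indicator {a ..} x \<partial>lborel) =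
     (\<integral>\<^sup>+x. ennreal (f x * indicator {a ..} x) \<partial>lborel)"
    by (intro nn_integral_cong) (auto simp: indicator_def)
  moreover have M: "(\<lambda>x. f x * indicator {a ..} x) \<in> borel_measurable borel"
    using f_borel by (intro borel_measurable_times borel_measurable_indicator) auto
  ultimately have "((\<lambda>x. f x * indicator {a ..} x) has_integral (T - F a)) UNIV"
    using F_le_T nonneg
    by (intro nn_integral_has_integral[OF M]) (auto simp: indicator_def)
  moreover have "(\<lambda>x. if x \<in> {a..} then f x else 0) = (\<lambda>x. f x * indicator {a ..} x)"
    by (auto simp: indicator_def)
  ultimately show ?thesis
    by (subst has_integral_restrict_UNIV[symmetric]) simp
qed

definition Ep :: "nat \<Rightarrow> real \<Rightarrow> real" where "Ep m t = (\<Sum>j\<le>m. t^j / fact j)"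

lemma Ep_deriv: "(Ep m has_real_derivative (Ep m t - t^m / fact m)) (at t)"
proof (induction m)
  case 0
  then show ?case by (simp add: Ep_def)
next
  case (Suc m)
  have eq: "Ep (Suc m) = (\<lambda>t. Ep m t + t^Suc m / fact (Suc m))"
    by (auto simp: Ep_def)
  have "((\<lambda>t. Ep m t + t^Suc m / fact (Suc m)) has_real_derivative
          (Ep m t - t^m / fact m) + real (Suc m) * t^m / fact (Suc m)) (at t)"
  proof (rule DERIV_add[OF Suc.IH])
    have "((\<lambda>t. t^Suc m / fact (Suc m)) has_real_derivative real (Suc m) * t^(Suc m - 1) / fact (Suc m)) (at t)"
      by (intro derivative_eq_intros DERIV_pow) auto
    then show "((\<lambda>t. t^Suc m / fact (Suc m)) has_real_derivative real (Suc m) * t^m / fact (Suc m)) (at t)"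
      by simp
  qed
  moreover have "real (Suc m) * t^m / fact (Suc m) = t^m / fact m"
  proof -
    have "(fact (Suc m)::real) = real (Suc m) * fact m" by (simp only: fact_Suc)
    then show ?thesis by (simp del: of_nat_Suc)
  qed
  then have "(Ep m t - t^m / fact m) + real (Suc m) * t^m / fact (Suc m) = Ep m t"
    by simp
  ultimately show ?case by (simp add: eq)
qed

lemma Ep_deriv_chain[derivative_intros]:
  "(f has_real_derivative f') (at t within S) \<Longrightarrow>
   ((\<lambda>x. Ep m (f x)) has_real_derivative ((Ep m (f t) - f t ^ m / fact m) * f')) (at t within S)"
  by (rule DERIV_chain2[OF Ep_deriv])

lemma Ep_nonneg: "t \<ge> 0 \<Longrightarrow> Ep m t \<ge> 0"
  unfolding Ep_def by (intro sum_nonneg) auto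

lemma Ep_le_exp: "t \<ge> 0 \<Longrightarrow> Ep m t \<le> exp t"
proof -
  assume t: "t \<ge> 0"
  have "(\<lambda>n. t^n / fact n) sums exp t" using exp_converges[of t] by (simp add: divide_inverse mult.commute)
  then have "(\<Sum>j\<in>{..<Suc m}. t^j / fact j) \<le> (\<Sum>n. t^n / fact n)"
    using t by (intro sum_le_suminf) (auto simp: sums_iff)
  then have "(\<Sum>j<Suc m. t^j / fact j) \<le> exp t" using \<open>_ sums exp t\<close> by (simp add: sums_iff)
  then show ?thesis unfolding Ep_def by (simp add: lessThan_Suc_atMost)
qed

lemma Ep_ge1: "t \<ge> 0 \<Longrightarrow> Ep m t \<ge> 1"
  unfolding Ep_def
proof -
  assume "t\<ge>0"
  have "(\<Sum>j\<le>m. t^j / fact j) = 1 + (\<Sum>j\<in>{1..m}. t^j / fact j)"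
    by (simp add: sum.atMost_shift atMost_atLeast0 sum.atLeast_Suc_atMost)
  also have "\<dots> \<ge> 1" using \<open>t\<ge>0\<close> by (intro add_increasing2 sum_nonneg) auto
  finally show "1 \<le> (\<Sum>j\<le>m. t^j / fact j)" .
qed

lemma upper_nat:
  assumes y: "y > 0"
  shows "upper_inc_Gamma (real (Suc m)) y = fact m * exp (-y) * Ep m y"
proof -
  let ?F = "\<lambda>t. - fact m * exp (-t) * Ep m t"
  have D: "DERIV ?F t :> t powr (real (Suc m) - 1) * exp (-t)" if "y \<le> t" for t
  proof -
    have d1: "((\<lambda>t. exp(-t)) has_real_derivative -exp(-t)) (at t)"
      by (auto intro!: derivative_eq_intros)
    have "DERIV ?F t :> - fact m * (- exp (-t) * Ep m t + exp (-t) * (Ep m t - t^m / fact m))"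
      using DERIV_cmult[OF DERIV_mult[OF d1 Ep_deriv[of m t]], of "- fact m"] by (simp add: algebra_simps)
    moreover have "- fact m * (- exp (-t) * Ep m t + exp (-t) * (Ep m t - t^m / fact m))
       = t powr (real (Suc m) - 1) * exp (-t)"
      using that y by (simp add: powr_realpow field_simps)
    ultimately show ?thesis by simp
  qed
  have L0: "((\<lambda>t::real. \<Sum>j\<le>m. t^j / exp t / fact j) \<longlongrightarrow> 0) at_top"
    by (intro tendsto_null_sum tendsto_divide_zero tendsto_power_div_exp_0)
  have "((\<lambda>t::real. - fact m * (\<Sum>j\<le>m. t^j / exp t / fact j)) \<longlongrightarrow> - fact m * 0) at_top"
    using L0 by (intro tendsto_mult tendsto_const) simp
  moreover have "(\<lambda>t::real. - fact m * (\<Sum>j\<le>m. t^j / exp t / fact j)) = ?F"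
    by (auto simp: Ep_def sum_distrib_left exp_minus field_simps)
  ultimately have L: "(?F \<longlongrightarrow> 0) at_top" by simp
  have "((\<lambda>t. t powr (real (Suc m) - 1) * exp (-t)) has_integral (0 - ?F y)) {y..}"
    by (rule improper_FTC[OF _ D _ L]) auto
  then show ?thesis unfolding upper_inc_Gamma_def by (simp add: integral_unique)
qed

lemma powr_between:
  fixes t :: real
  assumes "t > 0" "a \<le> e" "e \<le> b"
  shows "t powr e \<le> t powr a + t powr b"
proof (cases "t \<ge> 1")
  case True
  then have "t powr e \<le> t powr b" using assms by (intro powr_mono) auto
  then show ?thesis by (smt (verit) powr_ge_zero)
next
  case False
  then have "t powr e \<le> t powr a" using assms by (intro powr_mono') auto
  then show ?thesis by (smt (verit) powr_ge_zero)
qed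

lemma upper_cont:
  assumes y: "y > 0" and s0: "s0 \<ge> 1"
  shows "isCont (\<lambda>s. upper_inc_Gamma s y) s0"
proof -
  define sc where "sc s = max (1/2) (min (s0+1) s)" for s :: real
  have sc_ge: "sc s \<ge> 1/2" and sc_le: "sc s \<le> s0 + 1" for s using s0 unfolding sc_def by auto
  have sc0: "sc s0 = s0" using s0 unfolding sc_def by auto
  let ?f = "\<lambda>s t::real. t powr (s - 1) * exp (-t)"
  define h where "h t = ?f (1/2) t + ?f (s0 + 2) t" for t
  have hint: "h integrable_on {y..}" unfolding h_def
    using y s0 by (intro integrable_add f_int_sub) auto
  have C: "continuous (at s0) (\<lambda>s. upper_inc_Gamma (sc s) y)"
  proof (rule continuous_at_sequentiallyI)
    fix u :: "nat \<Rightarrow> real" assume u: "u \<longlonglongrightarrow> s0"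
    have scu: "(\<lambda>n. sc (u n)) \<longlonglongrightarrow> s0"
      using tendsto_max[OF tendsto_const tendsto_min[OF tendsto_const u], of "1/2" "s0+1"] sc0
      unfolding sc_def by simp
    have "(\<lambda>k. integral {y..} (?f (sc (u k)))) \<longlonglongrightarrow> integral {y..} (?f s0)"
    proof (rule dominated_convergence(2))
      show "?f (sc (u k)) integrable_on {y..}" for k
        using y sc_ge[of "u k"] by (intro f_int_sub) auto
      show "h integrable_on {y..}" by (rule hint)
      show "norm (?f (sc (u k)) t) \<le> h t" if "t \<in> {y..}" for k t
      proof -
        have t: "t > 0" using that y by auto
        have "t powr (sc (u k) - 1) \<le> t powr (1/2 - 1) + t powr (s0 + 2 - 1)"
          using sc_ge[of "u k"] sc_le[of "u k"] t by (intro powr_between) auto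
        then have "t powr (sc (u k) - 1) * exp (-t) \<le> (t powr (1/2 - 1) + t powr (s0 + 2 - 1)) * exp (-t)"
          by (intro mult_right_mono) auto
        then show ?thesis unfolding h_def using t
          by (simp add: abs_mult distrib_right)
      qed
      show "(\<lambda>k. ?f (sc (u k)) t) \<longlonglongrightarrow> ?f s0 t" if "t \<in> {y..}" for t
        using that y by (intro tendsto_intros scu) auto
    qed
    then show "(\<lambda>n. upper_inc_Gamma (sc (u n)) y) \<longlonglongrightarrow> upper_inc_Gamma (sc s0) y"
      unfolding upper_inc_Gamma_def sc0 by simp
  qed
  have ev: "eventually (\<lambda>s. upper_inc_Gamma (sc s) y = upper_inc_Gamma s y) (nhds s0)"
  proof -
    have "eventually (\<lambda>s. s \<in> ball s0 (1/2)) (nhds s0)"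
      by (intro eventually_nhds_in_open) auto
    then show ?thesis
    proof eventually_elim
      case (elim s)
      then have "sc s = s" using s0 unfolding sc_def by (auto simp: dist_real_def abs_if split: if_splits)
      then show ?case by simp
    qed
  qed
  show ?thesis
    using C unfolding isCont_def continuous_at sc0
    using ev by (subst (asm) tendsto_cong) (auto simp: eventually_at_filter elim: eventually_mono)
qed

lemma lower_le:
  fixes y s :: real
  assumes y: "y > 0" and s: "s \<ge> 1"
  shows "integral {0..y} (\<lambda>t. t powr (s-1) * exp(-t)) \<le> y powr s"
proof -
  have "integral {0..y} (\<lambda>t. t powr (s-1) * exp(-t)) \<le> integral {0..y} (\<lambda>t. y powr (s-1))"
  proof (rule integral_le)
    show "(\<lambda>t. t powr (s-1) * exp(-t)) integrable_on {0..y}" using s y by (intro f_int_sub) auto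
    show "(\<lambda>t. y powr (s-1)) integrable_on {0..y}" by (rule integrable_const_ivl)
    fix t assume t: "t \<in> {0..y}"
    have "t powr (s-1) \<le> y powr (s-1)" using t s by (intro powr_mono2) auto
    moreover have "exp (-t) \<le> 1" using t by auto
    ultimately show "t powr (s-1) * exp(-t) \<le> y powr (s-1)"
      by (metis exp_gt_zero less_eq_real_def mult_left_le mult_nonneg_nonneg powr_ge_zero order_trans)
  qed
  also have "\<dots> = y * y powr (s-1)" using y by simp
  also have "\<dots> = y powr s" using y by (simp add: powr_diff)
  finally show ?thesis .
qed

lemma Gamma_ge:
  fixes M s :: real
  assumes M: "M > 0" and s: "s \<ge> 1"
  shows "M powr (s-1) * exp (-(M+1)) \<le> Gamma s"
proof -
  have "M powr (s-1) * exp (-(M+1)) = integral {M..M+1} (\<lambda>t. M powr (s-1) * exp (-(M+1)))"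
    by simp
  also have "\<dots> \<le> integral {M..M+1} (\<lambda>t. t powr (s-1) * exp(-t))"
  proof (rule integral_le)
    show "(\<lambda>t. t powr (s-1) * exp(-t)) integrable_on {M..M+1}" using s M by (intro f_int_sub) auto
    fix t assume t: "t \<in> {M..M+1}"
    have "M powr (s-1) \<le> t powr (s-1)" using t s M by (intro powr_mono2) auto
    moreover have "exp (-(M+1)) \<le> exp (-t)" using t by auto
    ultimately show "M powr (s-1) * exp (-(M+1)) \<le> t powr (s-1) * exp(-t)"
      by (intro mult_mono) auto
  qed (rule integrable_const_ivl)
  also have "\<dots> \<le> integral {0..} (\<lambda>t. t powr (s-1) * exp(-t))"
    using s M by (intro integral_subset_le f_int_sub) auto
  also have "\<dots> = Gamma s" using f_has_Gamma[of s] s by (simp add: integral_unique)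
  finally show ?thesis .
qed

lemma upper_ratio_top:
  fixes y :: real
  assumes y: "y > 0"
  shows "((\<lambda>s. upper_inc_Gamma s y / Gamma s) \<longlongrightarrow> 1) at_top"
proof -
  define M where "M = 2 * y"
  have M: "M > 0" using y by (simp add: M_def)
  define L where "L s = integral {0..y} (\<lambda>t. t powr (s-1) * exp(-t))" for s
  define B where "B s = M * exp (M + 1) * (1/2) powr s" for s
  have "LIM s at_top. ln (2::real) * s :> at_top"
    by (rule filterlim_tendsto_pos_mult_at_top[OF tendsto_const _ filterlim_ident]) simp
  then have "LIM s at_top. - (ln (2::real) * s) :> at_bot" by (simp add: filterlim_uminus_at_bot)
  then have "((\<lambda>s::real. exp (-(ln (2::real) * s))) \<longlongrightarrow> 0) at_top" by (rule filterlim_compose[OF exp_at_bot])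
  moreover have "(\<lambda>s::real. exp (-(ln (2::real) * s))) = (\<lambda>s::real. (1/2::real) powr s)"
    by (auto simp: powr_def ln_div)
  ultimately have "((\<lambda>s::real. (1/2::real) powr s) \<longlongrightarrow> 0) at_top" by simp
  then have B: "(B \<longlongrightarrow> 0) at_top" unfolding B_def
    by (rule tendsto_mult_right_zero)
  have bnd: "0 \<le> L s / Gamma s \<and> L s / Gamma s \<le> B s" if s: "s \<ge> 1" for s
  proof -
    have G: "Gamma s > 0" using s by (intro Gamma_real_pos) auto
    have L0: "L s \<ge> 0" unfolding L_def using s y by (intro integral_nonneg f_int_sub) auto
    have "L s / Gamma s \<le> y powr s / (M powr (s-1) * exp (-(M+1)))"
      using lower_le[OF y s] Gamma_ge[OF M s] L0 G M unfolding L_def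
      by (intro frac_le) auto
    also have "\<dots> = B s"
    proof -
      have e1: "M powr (s-1) = M powr s / M" using M by (simp add: powr_diff)
      have e2: "y powr s / M powr s = (1/2) powr s"
        using M y by (simp add: powr_divide[symmetric] M_def)
      have e3: "exp(-(M+1)) = 1/exp(M+1)" using exp_minus[of "M+1"] by (simp add: divide_inverse)
      have "y powr s / (M powr (s-1) * exp (-(M+1))) = (y powr s / M powr s) * M * exp (M+1)"
        unfolding e1 e3 using M by (simp add: field_simps)
      then show ?thesis unfolding e2 B_def by simp
    qed
    finally show ?thesis using L0 G by simp
  qed
  have "((\<lambda>s. L s / Gamma s) \<longlongrightarrow> 0) at_top"
  proof (rule tendsto_sandwich[OF _ _ tendsto_const B])
    show "eventually (\<lambda>s. 0 \<le> L s / Gamma s) at_top"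
      using bnd by (intro eventually_at_top_linorderI[of 1]) auto
    show "eventually (\<lambda>s. L s / Gamma s \<le> B s) at_top"
      using bnd by (intro eventually_at_top_linorderI[of 1]) auto
  qed
  then have "((\<lambda>s. 1 - L s / Gamma s) \<longlongrightarrow> 1 - 0) at_top" by (intro tendsto_intros)
  moreover have "eventually (\<lambda>s. 1 - L s / Gamma s = upper_inc_Gamma s y / Gamma s) at_top"
  proof (intro eventually_at_top_linorderI[of 1])
    fix s :: real assume s: "s \<ge> 1"
    have G: "Gamma s > 0" using s by (intro Gamma_real_pos) auto
    show "1 - L s / Gamma s = upper_inc_Gamma s y / Gamma s"
      using upper_split[of s y] s y G unfolding L_def by (simp add: field_simps)
  qed
  ultimately show ?thesis by (simp add: tendsto_cong)
qed

lemma exp_Ep_lim: "((\<lambda>u::real. exp(-u) * Ep m u) \<longlongrightarrow> 0) at_top"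
proof -
  have L0: "((\<lambda>t::real. \<Sum>j\<le>m. t^j / exp t / fact j) \<longlongrightarrow> 0) at_top"
    by (intro tendsto_null_sum tendsto_divide_zero tendsto_power_div_exp_0)
  moreover have "(\<lambda>t::real. \<Sum>j\<le>m. t^j / exp t / fact j) = (\<lambda>u::real. exp(-u) * Ep m u)"
    by (auto simp: Ep_def sum_distrib_left exp_minus field_simps)
  ultimately show ?thesis by simp
qed

lemma kint:
  fixes a :: real
  assumes "a > 0"
  shows "((\<lambda>t. t * (t^2/2)^m * exp(-(t^2/2))) has_integral (fact m * exp(-(a^2/2)) * Ep m (a^2/2))) {a..}"
proof -
  let ?G = "\<lambda>t::real. - fact m * (exp(-(t^2/2)) * Ep m (t^2/2))"
  have D: "DERIV ?G t :> t * (t^2/2)^m * exp(-(t^2/2))" for t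
  proof -
    have d0: "((\<lambda>t. t^2/2) has_real_derivative t) (at t)"
      by (auto intro!: derivative_eq_intros)
    have d1: "((\<lambda>t. exp(-(t^2/2))) has_real_derivative exp(-(t^2/2)) * (- t)) (at t)"
      by (auto intro!: derivative_eq_intros)
    have d2: "((\<lambda>t. Ep m (t^2/2)) has_real_derivative (Ep m (t^2/2) - (t^2/2)^m / fact m) * t) (at t)"
      by (rule Ep_deriv_chain[OF d0])
    have "DERIV ?G t :> - fact m * (exp(-(t^2/2)) * (- t) * Ep m (t^2/2) + exp(-(t^2/2)) * ((Ep m (t^2/2) - (t^2/2)^m / fact m) * t))"
      using DERIV_cmult[OF DERIV_mult[OF d1 d2], of "- fact m"] by (simp add: algebra_simps)
    moreover have "- fact m * (exp(-(t^2/2)) * (- t) * Ep m (t^2/2) + exp(-(t^2/2)) * ((Ep m (t^2/2) - (t^2/2)^m / fact m) * t))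
        = t * (t^2/2)^m * exp(-(t^2/2))"
      by (simp add: algebra_simps)
    ultimately show ?thesis by simp
  qed
  have lim2: "LIM t at_top. t^2/2 :> (at_top :: real filter)"
  proof -
    have "LIM t at_top. t^2 :> (at_top :: real filter)"
      by (rule filterlim_pow_at_top[OF _ filterlim_ident]) simp
    from filterlim_tendsto_pos_mult_at_top[OF tendsto_const[of "1/2::real"] _ this]
    show ?thesis by simp
  qed
  have L: "(?G \<longlongrightarrow> - fact m * 0) at_top"
    by (intro tendsto_mult tendsto_const filterlim_compose[OF exp_Ep_lim lim2])
  have "((\<lambda>t. t * (t^2/2)^m * exp(-(t^2/2))) has_integral (- fact m * 0 - ?G a)) {a..}"
    by (rule improper_FTC[OF _ D _ L]) (use assms in auto)
  then show ?thesis by (simp add: mult.assoc)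
qed

lemma rG: "rGamma (real m + 1) = inverse (fact m)"
  using Gamma_fact[of m] by (simp add: rGamma_inverse_Gamma add.commute)

lemma summable_expser: "summable (\<lambda>m. (z::real)^m / fact m)"
  using summable_exp[of z] by (simp add: divide_inverse mult.commute)

lemma summable_Ep_ser: "y \<ge> 0 \<Longrightarrow> summable (\<lambda>m. (y::real)^m / fact m * Ep m y)"
proof -
  assume y: "y \<ge> 0"
  show ?thesis
  proof (rule summable_comparison_test'[of "\<lambda>m. exp y * (y^m / fact m)" 0])
    show "summable (\<lambda>m. exp y * (y^m / fact m))" by (intro summable_mult summable_expser)
    fix m :: nat
    have "norm (y^m / fact m * Ep m y) = y^m / fact m * Ep m y" using y Ep_nonneg[of y m] by simp
    also have "\<dots> \<le> y^m / fact m * exp y" using y Ep_le_exp[of y m] by (intro mult_left_mono) auto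
    also have "\<dots> = exp y * (y^m / fact m)" by (rule mult.commute)
    finally show "norm (y^m / fact m * Ep m y) \<le> exp y * (y^m / fact m)" .
  qed
qed

lemma inv_div_sq: "(X::real) * inverse f / f = X / f^2"
  by (simp add: divide_inverse power2_eq_square)

lemma marcum_val:
  fixes y :: real
  assumes y: "y > 0"
  shows "marcum_Q 1 (sqrt (2*y)) (sqrt (2*y)) = exp(-2*y) * (\<Sum>m. y^m / fact m * Ep m y)"
proof -
  define a where "a = sqrt (2*y)"
  have a: "a > 0" using y by (simp add: a_def)
  have a2: "a^2 = 2*y" using y by (simp add: a_def)
  have a22: "a^2/2 = y" using a2 by simp
  define h where "h m t = exp(-y) * (y^m / (fact m)^2) * (t * (t^2/2)^m * exp(-(t^2/2)))" for m t
  define V where "V m = exp(-y) * (y^m / (fact m)^2) * (fact m * exp(-y) * Ep m y)" for m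
  have Veq: "V m = exp(-2*y) * (y^m / fact m * Ep m y)" for m
  proof -
    have "exp(-y) * exp(-y) = exp(-2*y)" by (simp add: exp_add[symmetric])
    then show ?thesis unfolding V_def by (simp add: power2_eq_square field_simps)
  qed
  have Vsum: "summable V" unfolding Veq using y by (intro summable_mult summable_Ep_ser) auto
  have V0: "V m \<ge> 0" for m unfolding Veq using y Ep_nonneg[of y m] by simp
  have hint: "(h m has_integral V m) {a..}" for m
    using has_integral_mult_right[OF kint[OF a, of m], of "exp(-y) * (y^m / (fact m)^2)"] a22
    unfolding h_def V_def by simp
  have h0: "h m t \<ge> 0" if "t \<ge> a" for m t using that a y unfolding h_def by simp
  have hsum: "summable (\<lambda>m. h m t)" if "t \<ge> a" for t
  proof -
    have "summable (\<lambda>m. (exp(-y) * (t * exp(-(t^2/2)))) * ((y * (t^2/2))^m / fact m))"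
      by (intro summable_mult summable_expser)
    then show ?thesis
    proof (rule summable_comparison_test'[where N=0])
      fix m :: nat
      have f1: "fact m \<ge> (1::real)" by simp
      have "norm (h m t) = h m t" using h0[OF that] by simp
      also have "\<dots> = (exp(-y) * (t * exp(-(t^2/2)))) * ((y * (t^2/2))^m / (fact m * fact m))"
        unfolding h_def by (simp add: power2_eq_square power_mult_distrib field_simps)
      also have "\<dots> \<le> (exp(-y) * (t * exp(-(t^2/2)))) * ((y * (t^2/2))^m / fact m)"
        using that a y f1
        by (intro mult_left_mono divide_left_mono) (auto simp: mult_le_cancel_right1)
      finally show "norm (h m t) \<le> (exp(-y) * (t * exp(-(t^2/2)))) * ((y * (t^2/2))^m / fact m)" .
    qed
  qed
  define F where "F n t = (\<Sum>m<n. h m t)" for n t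
  have Fint: "(F n has_integral (\<Sum>m<n. V m)) {a..}" for n
    unfolding F_def by (intro has_integral_sum hint) auto
  have MCT: "(\<lambda>t. \<Sum>m. h m t) integrable_on {a..} \<and>
      ((\<lambda>k. integral {a..} (F k)) \<longlonglongrightarrow> integral {a..} (\<lambda>t. \<Sum>m. h m t))"
  proof (rule monotone_convergence_increasing)
    show "F k integrable_on {a..}" for k using Fint by blast
    show "F k t \<le> F (Suc k) t" if "t \<in> {a..}" for k t
      using h0[of t k] that unfolding F_def by simp
    show "(\<lambda>k. F k t) \<longlonglongrightarrow> (\<Sum>m. h m t)" if "t \<in> {a..}" for t
      unfolding F_def using hsum[of t] that by (intro summable_LIMSEQ) auto
    have "norm (integral {a..} (F k)) \<le> suminf V" for k
    proof -
      have "integral {a..} (F k) = (\<Sum>m<k. V m)" using Fint by (simp add: integral_unique)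
      moreover have "(\<Sum>m<k. V m) \<le> suminf V" using Vsum V0 by (intro sum_le_suminf) auto
      moreover have "(\<Sum>m<k. V m) \<ge> 0" using V0 by (intro sum_nonneg) auto
      ultimately show ?thesis by simp
    qed
    then show "bounded (range (\<lambda>k. integral {a..} (F k)))"
      unfolding bounded_iff by blast
  qed
  have "integral {a..} (F k) = (\<Sum>m<k. V m)" for k using Fint integral_unique by blast
  then have "(\<lambda>k. integral {a..} (F k)) \<longlonglongrightarrow> suminf V"
    using summable_LIMSEQ[OF Vsum] by simp
  then have I: "integral {a..} (\<lambda>t. \<Sum>m. h m t) = suminf V"
    using MCT LIMSEQ_unique by blast
  have integrand: "t powr 1 * exp (- (t\<^sup>2 + a\<^sup>2) / 2) * bessel_I (1 - 1) (a * t) = (\<Sum>m. h m t)"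
    if t: "t \<ge> a" for t
  proof -
    have tp: "t > 0" using t a by simp
    have termeq: "(a * t / 2) powr (2 * real m + (1 - 1)) * rGamma (real m + (1 - 1) + 1) / fact m
        = (y * (t^2/2))^m / (fact m)^2" for m
    proof -
      have "(a * t / 2)^2 = a^2 * t^2 / 4" by (simp add: power_mult_distrib power_divide)
      then have sq: "(a * t / 2)^2 = y * (t^2/2)" using a2 by simp
      have "(a * t / 2) powr (2 * real m + (1 - 1)) = (a * t / 2) powr (real (2*m))" by simp
      also have "\<dots> = (a * t / 2) ^ (2*m)" using a tp by (intro powr_realpow) simp
      also have "\<dots> = ((a * t / 2)^2)^m" by (simp only: power_mult)
      finally have e1: "(a * t / 2) powr (2 * real m + (1 - 1)) = (y * (t^2/2))^m" unfolding sq .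
      have e2: "rGamma (real m + (1 - 1) + 1) = inverse (fact m)" using rG by simp
      show ?thesis unfolding e1 e2 by (rule inv_div_sq)
    qed
    have bsum: "summable (\<lambda>m. (y * (t^2/2))^m / (fact m)^2)"
    proof (rule summable_comparison_test'[where N=0, OF summable_expser[of "y * (t^2/2)"]])
      fix m :: nat
      have f1: "fact m \<ge> (1::real)" by simp
      have "(y * (t^2/2))^m / (fact m)^2 \<le> (y * (t^2/2))^m / fact m"
        using y f1 unfolding power2_eq_square by (intro divide_left_mono) (auto simp: mult_le_cancel_right1)
      then show "norm ((y * (t^2/2))^m / (fact m)^2) \<le> (y * (t^2/2))^m / fact m"
        using y by simp
    qed
    have "bessel_I (1 - 1) (a * t) = (\<Sum>m. (y * (t^2/2))^m / (fact m)^2)"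
      unfolding bessel_I_def using termeq by simp
    moreover have "exp (- (t\<^sup>2 + a\<^sup>2) / 2) = exp(-y) * exp(-(t^2/2))"
      using a2 by (simp add: exp_add[symmetric] field_simps)
    ultimately have "t powr 1 * exp (- (t\<^sup>2 + a\<^sup>2) / 2) * bessel_I (1 - 1) (a * t)
        = (exp(-y) * (t * exp(-(t^2/2)))) * (\<Sum>m. (y * (t^2/2))^m / (fact m)^2)"
      using tp by simp
    also have "\<dots> = (\<Sum>m. (exp(-y) * (t * exp(-(t^2/2)))) * ((y * (t^2/2))^m / (fact m)^2))"
      by (rule suminf_mult[OF bsum, symmetric])
    also have "\<dots> = (\<Sum>m. h m t)"
      unfolding h_def by (intro suminf_cong) (simp only: power_mult_distrib, simp add: field_simps)
    finally show ?thesis .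
  qed
  have ic: "integral {a..} (\<lambda>t. t powr 1 * exp (- (t\<^sup>2 + a\<^sup>2) / 2) * bessel_I (1 - 1) (a * t))
      = integral {a..} (\<lambda>t. \<Sum>m. h m t)"
    by (rule integral_cong) (use integrand in auto)
  have "marcum_Q 1 a a = a powr (1 - 1) * integral {a..} (\<lambda>t. t powr 1 * exp (- (t\<^sup>2 + a\<^sup>2) / 2) * bessel_I (1 - 1) (a * t))"
    unfolding marcum_Q_def ..
  also have "\<dots> = integral {a..} (\<lambda>t. \<Sum>m. h m t)" unfolding ic using a by simp
  also have "\<dots> = exp(-2*y) * (\<Sum>m. y^m / fact m * Ep m y)"
    unfolding I Veq using y by (intro suminf_mult summable_Ep_ser) auto
  finally show ?thesis unfolding a_def .
qed

lemma expect_poisson: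
  fixes a :: "nat \<Rightarrow> real"
  assumes lam: "lam > 0" and bnd: "\<And>n. \<bar>a n\<bar> \<le> B"
    and S: "(\<lambda>n. lam^n / fact n * exp (-lam) * a n) sums S"
  shows "measure_pmf.expectation (poisson_pmf lam) a = S"
proof -
  have "measure_pmf.expectation (poisson_pmf lam) a =
        (\<integral>n. pmf (poisson_pmf lam) n * a n \<partial>count_space UNIV)"
    unfolding measure_pmf_eq_density by (subst integral_density) auto
  also have "\<dots> = (\<integral>n. lam^n / fact n * exp (-lam) * a n \<partial>count_space UNIV)"
    using lam by simp
  also have "\<dots> = (\<Sum>n. lam^n / fact n * exp (-lam) * a n)"
  proof (rule integral_count_space_nat)
    show "integrable (count_space UNIV) (\<lambda>n. lam^n / fact n * exp (-lam) * a n)"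
      unfolding integrable_count_space_nat_iff
    proof (rule summable_comparison_test'[where N=0])
      show "summable (\<lambda>n. (exp (-lam) * B) * (lam^n / fact n))"
        by (intro summable_mult summable_expser)
      fix n :: nat
      have "norm (lam^n / fact n * exp (-lam) * a n) = (lam^n / fact n * exp (-lam)) * \<bar>a n\<bar>"
        using lam by (simp add: abs_mult)
      also have "\<dots> \<le> (lam^n / fact n * exp (-lam)) * B"
        using lam bnd[of n] by (intro mult_left_mono) auto
      also have "\<dots> = (exp (-lam) * B) * (lam^n / fact n)" by simp
      finally show "norm (norm (lam^n / fact n * exp (-lam) * a n)) \<le> (exp (-lam) * B) * (lam^n / fact n)"
        by simp
    qed
  qed
  also have "\<dots> = S" using S by (simp add: sums_iff)
  finally show ?thesis .
qed

lemma exp_ser_sums: "(\<lambda>n. (z::real)^n / fact n) sums exp z"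
  using exp_converges[of z] by (simp add: divide_inverse mult.commute)

context
  fixes lam x :: real
  assumes lam: "lam > 0" and x: "x > 0"
begin

definition "yy = lam * exp (-x)"
definition "cc = exp (-lam) / (1 - exp (-lam))"
definition "RR s = exp yy * upper_inc_Gamma s yy / Gamma s"
definition "gg e n = exp (- x * real (Suc n)) * H_fun lam x (e * real (Suc n))"

lemma yy_pos: "yy > 0" using lam by (simp add: yy_def)
lemma cc_pos: "cc > 0"
  using lam by (simp add: cc_def)

lemma H_eq: "H_fun lam x s = cc * (RR s - 1)"
  unfolding H_fun_def cc_def RR_def yy_def by simp

lemma RR_bounds: "s > 0 \<Longrightarrow> 0 \<le> RR s \<and> RR s \<le> exp yy"
proof -
  assume s: "s > 0"
  have G: "Gamma s > 0" using s by (intro Gamma_real_pos)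
  have "0 \<le> upper_inc_Gamma s yy" "upper_inc_Gamma s yy \<le> Gamma s"
    using upper_bounds[OF s, of yy] yy_pos by auto
  then show ?thesis unfolding RR_def using G
    by (auto simp: divide_le_eq)
qed

lemma gg_bound: "e > 0 \<Longrightarrow> norm (gg e n) \<le> cc * exp yy"
proof -
  assume e: "e > 0"
  have R: "0 \<le> RR (e * real (Suc n)) \<and> RR (e * real (Suc n)) \<le> exp yy"
    using e by (intro RR_bounds) auto
  have e1: "exp yy \<ge> 1" using yy_pos by simp
  have "\<bar>RR (e * real (Suc n)) - 1\<bar> \<le> exp yy" unfolding abs_le_iff using R e1 by linarith
  moreover have "exp (- x * real (Suc n)) \<le> 1" using x by simp
  ultimately have "exp (- x * real (Suc n)) * (cc * \<bar>RR (e * real (Suc n)) - 1\<bar>) \<le> 1 * (cc * exp yy)"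
    using cc_pos by (intro mult_mono) auto
  then show ?thesis unfolding gg_def H_eq using cc_pos by (simp add: abs_mult)
qed

lemma E_eq: "measure_pmf.expectation (Xstar_pmf lam) (\<lambda>k. exp (- x * real k) * H_fun lam x (e * real k))
   = measure_pmf.expectation (poisson_pmf lam) (gg e)"
  unfolding Xstar_pmf_def gg_def by simp

lemma lim_top:
  "((\<lambda>e. measure_pmf.expectation (poisson_pmf lam) (gg e)) \<longlongrightarrow>
      exp (- 2 * lam) / (1 - exp (- lam)) * exp (lam * exp (- x) - x) * (exp (lam * exp (- x)) - 1)) at_top"
proof -
  define f where "f n = exp (- x * real (Suc n)) * (cc * (exp yy - 1))" for n
  have "((\<lambda>e. measure_pmf.expectation (poisson_pmf lam) (gg e)) \<longlongrightarrow>
      measure_pmf.expectation (poisson_pmf lam) f) at_top"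
  proof (rule integral_dominated_convergence_at_top[where w="\<lambda>_. cc * exp yy"])
    show "f \<in> borel_measurable (measure_pmf (poisson_pmf lam))" by simp
    show "gg e \<in> borel_measurable (measure_pmf (poisson_pmf lam))" for e by simp
    show "integrable (measure_pmf (poisson_pmf lam)) (\<lambda>_. cc * exp yy)" by simp
    show "AE n in measure_pmf (poisson_pmf lam). ((\<lambda>e. gg e n) \<longlongrightarrow> f n) at_top"
    proof (rule AE_I2)
      fix n
      have lim: "LIM e at_top. e * real (Suc n) :> at_top"
        by (rule filterlim_at_top_mult_tendsto_pos[OF tendsto_const _ filterlim_ident]) simp
      have "((\<lambda>e. upper_inc_Gamma (e * real (Suc n)) yy / Gamma (e * real (Suc n))) \<longlongrightarrow> 1) at_top"
        by (rule filterlim_compose[OF upper_ratio_top[OF yy_pos] lim])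
      then have "((\<lambda>e. exp (- x * real (Suc n)) * (cc * (exp yy * (upper_inc_Gamma (e * real (Suc n)) yy / Gamma (e * real (Suc n))) - 1)))
           \<longlongrightarrow> exp (- x * real (Suc n)) * (cc * (exp yy * 1 - 1))) at_top"
        by (intro tendsto_intros)
      then show "((\<lambda>e. gg e n) \<longlongrightarrow> f n) at_top"
        unfolding gg_def H_eq RR_def f_def by simp
    qed
    show "\<forall>\<^sub>F e in at_top. AE n in measure_pmf (poisson_pmf lam). norm (gg e n) \<le> cc * exp yy"
      by (intro eventually_at_top_linorderI[of 1] AE_I2 gg_bound) auto
  qed
  moreover have "measure_pmf.expectation (poisson_pmf lam) f = cc * exp (-lam) * exp (-x) * exp yy * (exp yy - 1)"
  proof (rule expect_poisson[OF lam])
    show "\<bar>f n\<bar> \<le> cc * (exp yy - 1)" for n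
      unfolding f_def using x cc_pos yy_pos by (simp add: abs_mult mult_le_cancel_right1)
    define K where "K = cc * exp (-lam) * exp (-x) * (exp yy - 1)"
    have s1: "(\<lambda>n. yy^n / fact n * K) sums (exp yy * K)"
      by (intro sums_mult2 exp_ser_sums)
    have eqn: "yy^n / fact n * K = lam^n / fact n * exp (-lam) * f n" for n
    proof -
      have "yy^n = lam^n * exp (-x * real n)"
        unfolding yy_def by (simp add: power_mult_distrib exp_of_nat_mult[symmetric] mult.commute)
      moreover have "exp (- x * real (Suc n)) = exp (-x * real n) * exp (-x)"
        by (simp add: exp_add[symmetric] algebra_simps)
      ultimately show ?thesis unfolding f_def K_def by simp
    qed
    have feq: "(\<lambda>n. yy^n / fact n * K) = (\<lambda>n. lam^n / fact n * exp (-lam) * f n)"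
      by (rule ext) (rule eqn)
    have Kv: "exp yy * K = cc * exp (-lam) * exp (-x) * exp yy * (exp yy - 1)"
      unfolding K_def by (simp add: mult_ac)
    from s1 show "(\<lambda>n. lam^n / fact n * exp (-lam) * f n) sums (cc * exp (-lam) * exp (-x) * exp yy * (exp yy - 1))"
      unfolding feq Kv .
  qed
  moreover have "cc * exp (-lam) * exp (-x) * exp yy * (exp yy - 1) =
      exp (- 2 * lam) / (1 - exp (- lam)) * exp (lam * exp (- x) - x) * (exp (lam * exp (- x)) - 1)"
  proof -
    have "exp (- 2 * lam) = exp (-lam) * exp (-lam)" by (simp add: exp_add[symmetric])
    moreover have "exp (lam * exp (- x) - x) = exp yy * exp (-x)" by (simp add: yy_def exp_diff exp_minus divide_inverse)
    ultimately show ?thesis unfolding cc_def yy_def by simp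
  qed
  ultimately show ?thesis by simp
qed

lemma H_cont: "isCont (\<lambda>s. H_fun lam x s) (real (Suc n))"
proof -
  have K: "real (Suc n) \<ge> 1" by simp
  have Gp: "0 < Gamma (real (Suc n))" by (intro Gamma_real_pos) simp
  have G: "Gamma (real (Suc n)) \<noteq> 0" using Gp by (metis less_irrefl)
  have nz: "real (Suc n) \<notin> \<int>\<^sub>\<le>\<^sub>0" using of_nat_in_nonpos_Ints_iff[of "Suc n"] by simp
  have "isCont (\<lambda>s. cc * (exp yy * upper_inc_Gamma s yy / Gamma s - 1)) (real (Suc n))"
    by (intro continuous_intros upper_cont[OF yy_pos K] G nz)
  then show ?thesis unfolding H_eq RR_def .
qed

lemma RR_nat: "RR (real (Suc n)) = Ep n yy"
proof -
  have G: "Gamma (real (Suc n)) = fact n" using Gamma_fact[of n] by (simp add: add.commute)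
  show ?thesis unfolding RR_def G upper_nat[OF yy_pos]
    by (simp add: exp_minus field_simps)
qed

lemma E1_val: "measure_pmf.expectation (poisson_pmf lam) (gg 1) =
    cc * exp (-lam) * exp (-x) * ((\<Sum>n. yy^n / fact n * Ep n yy) - exp yy)"
proof (rule expect_poisson[OF lam])
  show "\<bar>gg 1 n\<bar> \<le> cc * exp yy" for n using gg_bound[of 1 n] by simp
  define K where "K = cc * exp (-lam) * exp (-x)"
  have s1: "(\<lambda>n. K * (yy^n / fact n * Ep n yy - yy^n / fact n)) sums (K * ((\<Sum>n. yy^n / fact n * Ep n yy) - exp yy))"
    using yy_pos by (intro sums_mult sums_diff summable_sums summable_Ep_ser exp_ser_sums) auto
  have eqn: "K * (yy^n / fact n * Ep n yy - yy^n / fact n) = lam^n / fact n * exp (-lam) * gg 1 n" for n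
  proof -
    have yyn: "yy^n = lam^n * exp (-x * real n)"
      unfolding yy_def by (simp add: power_mult_distrib exp_of_nat_mult[symmetric] mult.commute)
    have expn: "exp (- x * real (Suc n)) = exp (-x * real n) * exp (-x)"
      by (simp add: exp_add[symmetric] algebra_simps)
    have g1: "gg 1 n = exp (- x * real (Suc n)) * (cc * (Ep n yy - 1))"
      unfolding gg_def H_eq using RR_nat[of n] by simp
    show ?thesis unfolding K_def g1 yyn expn by (simp add: field_simps)
  qed
  have feq: "(\<lambda>n. K * (yy^n / fact n * Ep n yy - yy^n / fact n)) = (\<lambda>n. lam^n / fact n * exp (-lam) * gg 1 n)"
    by (rule ext) (rule eqn)
  from s1 show "(\<lambda>n. lam^n / fact n * exp (-lam) * gg 1 n) sums
      (cc * exp (-lam) * exp (-x) * ((\<Sum>n. yy^n / fact n * Ep n yy) - exp yy))"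
    unfolding feq unfolding K_def .
qed

lemma lim_one:
  "((\<lambda>e. measure_pmf.expectation (poisson_pmf lam) (gg e)) \<longlongrightarrow>
      measure_pmf.expectation (poisson_pmf lam) (gg 1)) (at 1)"
proof -
  define v where "v e = max (1/2) (e::real)" for e
  have v1: "v 1 = 1" by (simp add: v_def)
  have vpos: "v e > 0" for e by (simp add: v_def)
  have C: "continuous (at 1) (\<lambda>e. measure_pmf.expectation (poisson_pmf lam) (gg (v e)))"
  proof (rule continuous_at_sequentiallyI)
    fix u :: "nat \<Rightarrow> real" assume u: "u \<longlonglongrightarrow> 1"
    have vu: "(\<lambda>i. v (u i)) \<longlonglongrightarrow> 1"
      using tendsto_max[OF tendsto_const u, of "1/2"] unfolding v_def by simp
    show "(\<lambda>i. measure_pmf.expectation (poisson_pmf lam) (gg (v (u i)))) \<longlonglongrightarrow>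
          measure_pmf.expectation (poisson_pmf lam) (gg (v 1))"
      unfolding v1
    proof (rule integral_dominated_convergence[where w="\<lambda>_. cc * exp yy"])
      show "gg 1 \<in> borel_measurable (measure_pmf (poisson_pmf lam))" by simp
      show "gg (v (u i)) \<in> borel_measurable (measure_pmf (poisson_pmf lam))" for i by simp
      show "integrable (measure_pmf (poisson_pmf lam)) (\<lambda>_. cc * exp yy)" by simp
      show "AE n in measure_pmf (poisson_pmf lam). (\<lambda>i. gg (v (u i)) n) \<longlonglongrightarrow> gg 1 n"
      proof (rule AE_I2)
        fix n
        have "(\<lambda>i. v (u i) * real (Suc n)) \<longlonglongrightarrow> 1 * real (Suc n)"
          by (intro tendsto_intros vu)
        then have "(\<lambda>i. H_fun lam x (v (u i) * real (Suc n))) \<longlonglongrightarrow> H_fun lam x (real (Suc n))"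
          using isCont_tendsto_compose[OF H_cont] by simp
        then have "(\<lambda>i. exp (- x * real (Suc n)) * H_fun lam x (v (u i) * real (Suc n))) \<longlonglongrightarrow>
            exp (- x * real (Suc n)) * H_fun lam x (1 * real (Suc n))"
          by (intro tendsto_intros) simp
        then show "(\<lambda>i. gg (v (u i)) n) \<longlonglongrightarrow> gg 1 n" unfolding gg_def .
      qed
      show "AE n in measure_pmf (poisson_pmf lam). norm (gg (v (u i)) n) \<le> cc * exp yy" for i
        by (intro AE_I2 gg_bound vpos)
    qed
  qed
  then have "((\<lambda>e. measure_pmf.expectation (poisson_pmf lam) (gg (v e))) \<longlongrightarrow>
      measure_pmf.expectation (poisson_pmf lam) (gg 1)) (at 1)"
    unfolding continuous_at v1 .
  moreover have "eventually (\<lambda>e. measure_pmf.expectation (poisson_pmf lam) (gg (v e)) =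
      measure_pmf.expectation (poisson_pmf lam) (gg e)) (at 1)"
  proof -
    have "eventually (\<lambda>e. e \<in> ball 1 (1/2)) (at (1::real))"
      by (intro eventually_at_in_open') auto
    then show ?thesis
    proof eventually_elim
      case (elim e)
      then have "\<bar>e - 1\<bar> < 1/2" by (simp add: dist_real_def abs_minus_commute)
      then have "e \<ge> 1/2" by linarith
      then have "v e = e" unfolding v_def by simp
      then show ?case by simp
    qed
  qed
  ultimately show ?thesis by (simp only: tendsto_cong[symmetric])
qed

end

theorem mainTheorem5:
  fixes lam x :: real
  assumes "lam > 0" and "x > 0"
  shows "((\<lambda>\<epsilon>. measure_pmf.expectation (Xstar_pmf lam)
              (\<lambda>k. exp (- x * real k) * H_fun lam x (\<epsilon> * real k)))
          \<longlongrightarrow> exp (- 2 * lam) / (1 - exp (- lam)) * exp (lam * exp (- x) - x) *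
              (exp (lam * exp (- x)) *
                 marcum_Q 1 (sqrt (2 * lam * exp (- x))) (sqrt (2 * lam * exp (- x))) - 1)) (at 1)
       \<and> ((\<lambda>\<epsilon>. measure_pmf.expectation (Xstar_pmf lam)
              (\<lambda>k. exp (- x * real k) * H_fun lam x (\<epsilon> * real k)))
          \<longlongrightarrow> exp (- 2 * lam) / (1 - exp (- lam)) * exp (lam * exp (- x) - x) *
              (exp (lam * exp (- x)) - 1)) at_top"
proof -
  have E: "(\<lambda>\<epsilon>. measure_pmf.expectation (Xstar_pmf lam)
              (\<lambda>k. exp (- x * real k) * H_fun lam x (\<epsilon> * real k))) =
           (\<lambda>e. measure_pmf.expectation (poisson_pmf lam) (gg lam x e))"
    by (rule ext) (rule E_eq[OF assms])
  define y where "y = yy lam x"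
  define S where "S = (\<Sum>n. y ^ n / fact n * Ep n y)"
  have y: "y > 0" unfolding y_def by (rule yy_pos[OF assms])
  have ly: "lam * exp (- x) = y" unfolding y_def yy_def[OF assms] ..
  have m: "marcum_Q 1 (sqrt (2 * lam * exp (- x))) (sqrt (2 * lam * exp (- x))) = exp (-2*y) * S"
  proof -
    have h: "2 * lam * exp (- x) = 2 * y" using ly by (simp add: mult.assoc)
    show ?thesis unfolding h S_def by (rule marcum_val[OF y])
  qed
  have E1: "measure_pmf.expectation (poisson_pmf lam) (gg lam x 1) = cc lam * exp (-lam) * exp (-x) * (S - exp y)"
    using E1_val[OF assms] unfolding S_def y_def .
  have e1: "exp (- 2 * lam) = exp (-lam) * exp (-lam)" by (simp add: exp_add[symmetric])
  have e2: "exp (y - x) = exp y * exp (-x)" by (simp add: exp_add[symmetric])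
  have e3: "exp y * (exp (-2*y) * S) = exp (-y) * S" by (simp add: exp_add[symmetric] mult.assoc[symmetric])
  have e4: "exp y * exp (-y) = 1" by (simp add: exp_add[symmetric])
  have ccd: "cc lam = exp (-lam) / (1 - exp (-lam))" by (rule cc_def[OF assms])
  have T1: "measure_pmf.expectation (poisson_pmf lam) (gg lam x 1) =
      exp (- 2 * lam) / (1 - exp (- lam)) * exp (lam * exp (- x) - x) *
              (exp (lam * exp (- x)) *
                 marcum_Q 1 (sqrt (2 * lam * exp (- x))) (sqrt (2 * lam * exp (- x))) - 1)"
  proof -
    have "exp (- 2 * lam) / (1 - exp (- lam)) * exp (lam * exp (- x) - x) *
              (exp (lam * exp (- x)) *
                 marcum_Q 1 (sqrt (2 * lam * exp (- x))) (sqrt (2 * lam * exp (- x))) - 1)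
        = cc lam * exp (-lam) * (exp y * exp (-x)) * (exp (-y) * S - 1)"
      unfolding m e1 e2 ly e3 ccd by simp
    also have "\<dots> = cc lam * exp (-lam) * exp (-x) * ((exp y * exp (-y)) * S - exp y)"
      by (simp add: algebra_simps)
    also have "\<dots> = cc lam * exp (-lam) * exp (-x) * (S - exp y)" unfolding e4 by simp
    finally show ?thesis unfolding E1 by simp
  qed
  show ?thesis unfolding E using lim_one[OF assms] lim_top[OF assms] T1 by simp
qed

end
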